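(* Let $n\ge1$ and let $\operatorname{dist}$ be a distance generating the weak-* topology on the space $\mathcal P$ of Borel probability measures on $\mathbf{T}^n=\mathbf{R}^n/\mathbf{Z}^n$. Then for every $\varepsilon>0$ there exists a locally finite family of affine hyperplanes $(H_q)_q$ of $\mathbf{R}^n$ such that for every $\eta>0$ there exists $M_0\in\mathbf{N}$ such that for every $\boldsymbol\lambda\in\mathbf{R}^n$ with $d(\boldsymbol\lambda,H_q)>\eta$ for every $q$ and every $M\ge M_0$, \[\operatorname{dist}\Big(\frac1M\sum_{m=0}^{M-1}\bar\delta_{m\boldsymbol\lambda},\ \operatorname{Leb}_{\mathbf{R}^n/\mathbf{Z}^n}\Big)<\varepsilon,\] where $\bar\delta_x$ is the Dirac measure at the projection of $x$ on $\mathbf{R}^n/\mathbf{Z}^n$.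
   Context: $\operatorname{Leb}_{\mathbf{R}^n/\mathbf{Z}^n}$ is the Haar (Lebesgue) probability measure on the torus; $d$ is the Euclidean distance in $\mathbf{R}^n$. *)

theory Defs
  imports "HOL-Analysis.Analysis" "HOL-Probability.Probability"
begin

text \<open>The torus R^n/Z^n is modelled by the fundamental domain [0,1)^n inside real^'n;
  the projection sends x to its componentwise fractional part.\<close>

definition torus_cube :: "(real^'n) set" where
  "torus_cube = {x. \<forall>i. 0 \<le> x$i \<and> x$i < 1}"

definition torus_proj :: "real^'n \<Rightarrow> real^'n" where
  "torus_proj x = (\<chi> i. frac (x$i))"

text \<open>Borel probability measures on the torus = Borel probability measures on real^'n
  concentrated on the fundamental domain.\<close>
definition torus_prob_measures :: "(real^'n) measure set" where
  "torus_prob_measures = {\<mu>. prob_space \<mu> \<and> sets \<mu> = sets borel \<and>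
                              emeasure \<mu> (UNIV - torus_cube) = 0}"

text \<open>Continuous functions on the torus = continuous Z^n-periodic functions on R^n.\<close>
definition torus_continuous :: "(real^'n \<Rightarrow> real) \<Rightarrow> bool" where
  "torus_continuous f \<longleftrightarrow> continuous_on UNIV f \<and>
     (\<forall>x k. (\<forall>i. k$i \<in> \<int>) \<longrightarrow> f (x + k) = f x)"

definition weak_star_open :: "(real^'n) measure set \<Rightarrow> bool" where
  "weak_star_open U \<longleftrightarrow> U \<subseteq> torus_prob_measures \<and>
     (\<forall>\<mu>\<in>U. \<exists>F e. finite F \<and> (\<forall>f\<in>F. torus_continuous f) \<and> e > 0 \<and>
        {\<nu>\<in>torus_prob_measures. \<forall>f\<in>F. \<bar>integral\<^sup>L \<nu> f - integral\<^sup>L \<mu> f\<bar> < e} \<subseteq> U)"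

definition torus_dirac :: "real^'n \<Rightarrow> (real^'n) measure" where
  "torus_dirac x = return borel (torus_proj x)"

text \<open>(1/M) \<Sum>_{m=0}^{M-1} \<delta>bar_{m\<lambda>}, as a Borel measure.\<close>
definition orbit_average :: "nat \<Rightarrow> real^'n \<Rightarrow> (real^'n) measure" where
  "orbit_average M v =
     distr (measure_pmf (pmf_of_set {..<M})) borel (\<lambda>m. torus_proj (real m *\<^sub>R v))"

definition torus_leb :: "(real^'n) measure" where
  "torus_leb = density lborel (indicator torus_cube)"

definition affine_hyperplane :: "(real^'n) set \<Rightarrow> bool" where
  "affine_hyperplane h \<longleftrightarrow> (\<exists>a b. a \<noteq> 0 \<and> h = {x. a \<bullet> x = b})"

definition locally_finite_family :: "(real^'n) set set \<Rightarrow> bool" where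
  "locally_finite_family Hs \<longleftrightarrow> (\<forall>x. \<exists>r>0. finite {h\<in>Hs. h \<inter> ball x r \<noteq> {}})"

end

theory Submission
  imports Defs
begin


definition ee :: "real \<Rightarrow> complex" where "ee t = cis (2*pi*t)"

lemma ee_add: "ee (s + t) = ee s * ee t"
  by (simp add: ee_def cis_mult distrib_left)

lemma ee_int: "t \<in> \<int> \<Longrightarrow> ee t = 1"
  by (simp add: ee_def)

lemma ee_eq_1: "ee t = 1 \<Longrightarrow> t \<in> \<int>"
proof -
  assume "ee t = 1"
  then have "exp (\<i> * complex_of_real (2*pi*t)) = 1" by (simp add: ee_def cis_conv_exp)
  then obtain n :: int where "2*pi*t = of_int (2*n) * pi" by (auto simp: exp_eq_1)
  then have "t = of_int n" by simp
  then show ?thesis by simp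
qed

lemma ee_eq_iff: "ee s = ee t \<longleftrightarrow> s - t \<in> \<int>"
proof
  assume "ee s = ee t"
  then have "ee (s - t) = 1" using ee_add[of "s-t" t]
    by (metis add.commute diff_add_cancel ee_def cis_neq_zero mult_cancel_right1)
  then show "s - t \<in> \<int>" by (rule ee_eq_1)
next
  assume "s - t \<in> \<int>"
  then show "ee s = ee t" using ee_add[of "s-t" t] ee_int by simp
qed

lemma norm_ee [simp]: "norm (ee t) = 1" by (simp add: ee_def)
lemma cnj_ee: "cnj (ee t) = ee (- t)" by (simp add: ee_def cis_cnj)
lemma ee_power: "ee t ^ n = ee (real n * t)" unfolding ee_def Complex.DeMoivre by (simp add: mult_ac)
lemma ee_half: "ee (1/2) = -1" by (simp add: ee_def)
lemma ee_neg_half: "ee (-1/2) = -1" by (simp add: ee_def complex_eq_iff)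
lemma ee_frac: "ee (frac t) = ee t"
  by (simp add: ee_eq_iff frac_def)
lemma continuous_ee [continuous_intros]: "continuous_on S f \<Longrightarrow> continuous_on S (\<lambda>x. ee (f x))"
  unfolding ee_def by (intro continuous_intros)
lemma ee_sum: "finite I \<Longrightarrow> ee (\<Sum>i\<in>I. f i) = (\<Prod>i\<in>I. ee (f i))"
  by (induction I rule: finite_induct) (auto simp: ee_add, simp add: ee_def)



lemma torus_proj_eq: "torus_proj x = x + (\<chi> i. - of_int \<lfloor>x$i\<rfloor>)"
  by (simp add: torus_proj_def vec_eq_iff frac_def)

lemma torus_continuous_periodic:
  assumes "torus_continuous f" shows "f (torus_proj x) = f x"
  using assms unfolding torus_continuous_def torus_proj_eq by auto

lemma torus_proj_in_cube: "torus_proj x \<in> torus_cube"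
  by (simp add: torus_proj_def torus_cube_def frac_lt_1)

lemma torus_cube_borel: "torus_cube \<in> sets borel"
proof -
  have "torus_cube = (\<Inter>i. (\<lambda>x. x$i) -` {0..<1})"
    by (auto simp: torus_cube_def)
  moreover have "(\<lambda>x::real^'a. x$i) -` {0..<1} \<in> sets borel" for i
  proof -
    have "(\<lambda>x::real^'a. x$i) -` {0..<1} = {x. 0 \<le> x$i} \<inter> {x. x$i < 1}" by auto
    moreover have "closed {x::real^'a. 0 \<le> x$i}" by (intro closed_Collect_le continuous_intros)
    moreover have "open {x::real^'a. x$i < 1}" by (intro open_Collect_less continuous_intros)
    ultimately show ?thesis by auto
  qed
  ultimately show ?thesis by (metis (mono_tags, lifting) finite_class.finite_UNIV UNIV_not_empty sets.finite_INT)
qed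

lemma orbit_average_prob:
  assumes "M > 0"
  shows "orbit_average M v \<in> torus_prob_measures"
proof -
  have fin: "finite {..<M}" "{..<M} \<noteq> {}" using assms by auto
  have meas: "(\<lambda>m. torus_proj (real m *\<^sub>R v)) \<in> measurable (measure_pmf (pmf_of_set {..<M})) borel"
    by simp
  have "prob_space (orbit_average M v)"
    unfolding orbit_average_def
    by (rule prob_space.prob_space_distr[OF _ meas]) (rule prob_space_measure_pmf)
  moreover have "sets (orbit_average M v) = sets borel" by (simp add: orbit_average_def)
  moreover have "emeasure (orbit_average M v) (UNIV - torus_cube) = 0"
    unfolding orbit_average_def
    using torus_proj_in_cube torus_cube_borel
    by (subst emeasure_distr[OF meas]) (auto simp: vimage_def torus_proj_in_cube)
  ultimately show ?thesis by (simp add: torus_prob_measures_def)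
qed

lemma orbit_average_integral:
  assumes "M > 0" "torus_continuous f"
  shows "integral\<^sup>L (orbit_average M v) f = (\<Sum>m<M. f (real m *\<^sub>R v)) / real M"
proof -
  have meas: "(\<lambda>m. torus_proj (real m *\<^sub>R v)) \<in> measurable (measure_pmf (pmf_of_set {..<M})) borel"
    by simp
  have fm: "f \<in> borel_measurable borel"
    using assms(2) by (intro borel_measurable_continuous_onI) (simp add: torus_continuous_def)
  have "integral\<^sup>L (orbit_average M v) f = (\<Sum>m<M. f (torus_proj (real m *\<^sub>R v))) / real M"
    unfolding orbit_average_def
    using assms(1) by (simp add: integral_distr[OF meas fm], subst integral_pmf_of_set) auto
  also have "\<dots> = (\<Sum>m<M. f (real m *\<^sub>R v)) / real M"
    using torus_continuous_periodic[OF assms(2)] by simp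
  finally show ?thesis .
qed



lemma negligible_coord_hyperplane: "negligible {x::real^'n. x$i = c}"
proof -
  have "{x::real^'n. x$i = c} = {x. x \<bullet> axis i 1 = c}" by (simp add: cart_eq_inner_axis)
  moreover have "axis i (1::real) \<in> Basis" by simp
  ultimately show ?thesis using negligible_standard_hyperplane by metis
qed

lemma cube_sub_cbox: "torus_cube \<subseteq> cbox (0::real^'n) 1"
  by (auto simp: torus_cube_def mem_box_cart less_imp_le)

lemma cbox_minus_cube_negligible: "negligible (cbox (0::real^'n) 1 - torus_cube)"
proof -
  have "cbox (0::real^'n) 1 - torus_cube \<subseteq> \<Union> ((\<lambda>i. {x::real^'n. x$i = 1}) ` UNIV)"
    by (auto simp: torus_cube_def mem_box_cart less_le)
  moreover have "negligible (\<Union> ((\<lambda>i. {x::real^'n. x$i = 1}) ` UNIV))"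
    by (rule negligible_Union) (auto simp: negligible_coord_hyperplane)
  ultimately show ?thesis using negligible_subset by blast
qed

lemma content_unit_cbox: "Henstock_Kurzweil_Integration.content (cbox (0::real^'n) 1) = 1"
proof -
  have "(0::real^'n) \<in> cbox 0 1" by (simp add: mem_box_cart)
  then have "cbox (0::real^'n) 1 \<noteq> {}" by blast
  then show ?thesis by (simp add: content_cbox_cart)
qed

lemma has_integral_cube_iff:
  fixes f :: "real^'n \<Rightarrow> 'b::banach"
  shows "(f has_integral y) torus_cube \<longleftrightarrow> (f has_integral y) (cbox 0 1)"
  by (rule has_integral_spike_set_eq)
     (use cube_sub_cbox cbox_minus_cube_negligible in \<open>auto intro: negligible_subset\<close>)

lemma emeasure_cube: "emeasure lborel (torus_cube :: (real^'n) set) = 1"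
proof -
  have "((\<lambda>x. 1::real) has_integral 1) (cbox (0::real^'n) 1)"
    using has_integral_const[where 'a="real^'n" and a=0 and b=1 and c="1::real"] unfolding content_unit_cbox by simp
  then have "((\<lambda>x. 1::real) has_integral 1) (torus_cube :: (real^'n) set)"
    using has_integral_cube_iff by blast
  moreover have "((\<lambda>x. 1::real) has_integral 1) (torus_cube :: (real^'n) set) \<longleftrightarrow> emeasure lborel (torus_cube :: (real^'n) set) = ennreal 1"
    by (rule has_integral_iff_emeasure_lborel[OF torus_cube_borel]) simp
  ultimately show ?thesis by simp
qed

lemma torus_leb_prob: "torus_leb \<in> torus_prob_measures"
proof -
  have ind: "(indicator torus_cube :: real^'n \<Rightarrow> ennreal) \<in> borel_measurable lborel"
    using torus_cube_borel by (intro borel_measurable_indicator) simp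
  have "emeasure (torus_leb :: (real^'n) measure) UNIV = 1"
    unfolding torus_leb_def using torus_cube_borel
    by (simp add: emeasure_density[OF ind], subst nn_integral_indicator, auto simp: emeasure_cube)
  then have "prob_space (torus_leb :: (real^'n) measure)"
    by (intro prob_spaceI) (simp add: torus_leb_def)
  moreover have z: "(\<lambda>x::real^'n. indicator torus_cube x * indicator (UNIV - torus_cube) x) = (\<lambda>x. 0::ennreal)"
    by (auto simp: indicator_def fun_eq_iff)
  moreover have "emeasure (torus_leb :: (real^'n) measure) (UNIV - torus_cube) = 0"
  proof -
    have cc: "UNIV - torus_cube \<in> sets (lborel::(real^'n) measure)"
      using torus_cube_borel by (metis sets.compl_sets space_borel sets_lborel)
    show ?thesis unfolding torus_leb_def emeasure_density[OF ind cc] z by simp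
  qed
  ultimately show ?thesis by (simp add: torus_prob_measures_def torus_leb_def)
qed

lemma torus_leb_integral:
  fixes f :: "real^'n \<Rightarrow> real"
  assumes cont: "continuous_on UNIV f"
  shows "integral\<^sup>L torus_leb f = integral (cbox 0 1) f"
proof -
  have fm[measurable]: "f \<in> borel_measurable borel" using cont by (rule borel_measurable_continuous_onI)
  have cb[measurable]: "torus_cube \<in> sets (borel::(real^'n) measure)" by (rule torus_cube_borel)
  have m2: "(\<lambda>x. indicat_real torus_cube x * f x) \<in> borel_measurable borel" by measurable
  have m3: "(\<lambda>x. indicat_real torus_cube x *\<^sub>R f x) \<in> borel_measurable borel" by measurable
  have ai: "f absolutely_integrable_on cbox 0 1"
    using cont by (intro absolutely_integrable_continuous) (auto intro: continuous_on_subset)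
  have ai2: "set_integrable lebesgue torus_cube f"
    by (rule set_integrable_subset[OF ai]) (use torus_cube_borel cube_sub_cbox in auto)
  have "integral\<^sup>L (torus_leb :: (real^'n) measure) f
        = integral\<^sup>L lborel (\<lambda>x. indicator torus_cube x *\<^sub>R f x)"
    unfolding torus_leb_def
    using torus_cube_borel fm
    by (subst integral_density[symmetric]) (auto simp: ennreal_indicator m2 intro!: borel_measurable_indicator)
  also have "\<dots> = integral\<^sup>L lebesgue (\<lambda>x. indicator torus_cube x *\<^sub>R f x)"
    using m3 by (subst integral_completion) auto
  also have "\<dots> = integral torus_cube f"
    using set_lebesgue_integral_eq_integral(2)[OF ai2] by (simp add: set_lebesgue_integral_def)
  also have "\<dots> = integral (cbox 0 1) f"
    using has_integral_cube_iff by (metis integral_unique integrable_integral set_lebesgue_integral_eq_integral(1)[OF ai2])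
  finally show ?thesis .
qed



lemma has_integral_translate_cbox:
  fixes h :: "real^'n \<Rightarrow> 'b::real_normed_vector"
  assumes "(h has_integral I) (cbox a c)"
  shows "((\<lambda>x. h (x + d)) has_integral I) (cbox (a - d) (c - d))"
  using has_integral_affinity'[OF assms, of 1 d] by (simp add: add.commute)

lemma cbox_split_coord:
  fixes lo hi :: "real^'n::finite"
  assumes c: "lo$i \<le> c" "c \<le> hi$i"
  shows "cbox lo (\<chi> j. if j = i then c else hi$j) \<union> cbox (\<chi> j. if j = i then c else lo$j) hi = cbox lo hi"
    and "cbox lo (\<chi> j. if j = i then c else hi$j) \<inter> cbox (\<chi> j. if j = i then c else lo$j) hi \<subseteq> {x. x$i = c}"
proof -
  show "cbox lo (\<chi> j. if j = i then c else hi$j) \<union> cbox (\<chi> j. if j = i then c else lo$j) hi = cbox lo hi"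
  proof (intro set_eqI iffI)
    fix x :: "real^'n"
    assume "x \<in> cbox lo hi"
    then have x: "\<And>j. lo$j \<le> x$j \<and> x$j \<le> hi$j" by (simp add: mem_box_cart)
    show "x \<in> cbox lo (\<chi> j. if j = i then c else hi$j) \<union> cbox (\<chi> j. if j = i then c else lo$j) hi"
    proof (cases "c \<le> x$i")
      case True then show ?thesis using x by (auto simp: mem_box_cart)
    next
      case False then show ?thesis using x by (auto simp: mem_box_cart)
    qed
  next
    fix x :: "real^'n"
    assume "x \<in> cbox lo (\<chi> j. if j = i then c else hi$j) \<union> cbox (\<chi> j. if j = i then c else lo$j) hi"
    then show "x \<in> cbox lo hi"
    proof
      assume "x \<in> cbox lo (\<chi> j. if j = i then c else hi$j)"
      then have h: "lo$j \<le> x$j \<and> x$j \<le> (if j = i then c else hi$j)" for j by (simp add: mem_box_cart)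
      show ?thesis unfolding mem_box_cart proof (intro allI)
        fix j show "lo $ j \<le> x $ j \<and> x $ j \<le> hi $ j" using h[of j] c by (cases "j = i") auto
      qed
    next
      assume "x \<in> cbox (\<chi> j. if j = i then c else lo$j) hi"
      then have h: "(if j = i then c else lo$j) \<le> x$j \<and> x$j \<le> hi$j" for j by (simp add: mem_box_cart)
      show ?thesis unfolding mem_box_cart proof (intro allI)
        fix j show "lo $ j \<le> x $ j \<and> x $ j \<le> hi $ j" using h[of j] c by (cases "j = i") auto
      qed
    qed
  qed
  show "cbox lo (\<chi> j. if j = i then c else hi$j) \<inter> cbox (\<chi> j. if j = i then c else lo$j) hi \<subseteq> {x. x$i = c}"
  proof
    fix x assume "x \<in> cbox lo (\<chi> j. if j = i then c else hi$j) \<inter> cbox (\<chi> j. if j = i then c else lo$j) hi"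
    then have "x$i \<le> c" "c \<le> x$i" unfolding mem_box_cart Int_iff by (auto dest: spec[of _ i])
    then show "x \<in> {x. x$i = c}" by simp
  qed
qed
lemma cbox_split_coord':
  fixes lo hi :: "real^'n::finite"
  assumes "lo$i \<le> c" "c \<le> hi$i" "u = (\<chi> j. if j = i then c else hi$j)" "l = (\<chi> j. if j = i then c else lo$j)"
  shows "cbox lo u \<union> cbox l hi = cbox lo hi" "cbox lo u \<inter> cbox l hi \<subseteq> {x. x$i = c}"
  using cbox_split_coord[OF assms(1,2)] assms(3,4) by auto

lemma shift_integral:
  fixes h :: "real^'n \<Rightarrow> complex"
  assumes cont: "continuous_on UNIV h"
    and per: "\<And>x. h (x + axis i 1) = h x"
    and s: "0 \<le> s" "s \<le> 1"
  shows "integral (cbox 0 1) (\<lambda>x. h (x + s *\<^sub>R axis i 1)) = integral (cbox 0 1) h"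
proof -
  define b :: "real^'n" where "b = axis i 1"
  define los :: "real^'n" where "los = (\<chi> j. if j = i then s else (0::real^'n)$j)"
  define his :: "real^'n" where "his = (\<chi> j. if j = i then s else (1::real^'n)$j)"
  define A where "A = cbox los 1"
  define B where "B = cbox 0 his"
  define IA where "IA = integral A h"
  define IB where "IB = integral B h"
  have cA: "(h has_integral IA) A" unfolding IA_def A_def
    using cont by (intro integrable_integral integrable_continuous) (auto intro: continuous_on_subset)
  have cB: "(h has_integral IB) B" unfolding IB_def B_def
    using cont by (intro integrable_integral integrable_continuous) (auto intro: continuous_on_subset)
  have sp1: "(0::real^'n)$i \<le> s" "s \<le> (1::real^'n)$i" using s by auto
  have Q: "B \<union> A = cbox 0 1"
    unfolding A_def B_def los_def his_def by (rule cbox_split_coord(1)[OF sp1])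
  have negAB: "negligible (B \<inter> A)"
    by (rule negligible_subset[OF negligible_coord_hyperplane[of i s]])
       (unfold A_def B_def los_def his_def, rule cbox_split_coord(2)[OF sp1])
  have hQ: "(h has_integral (IB + IA)) (cbox 0 1)"
    using has_integral_Un[OF cB cA negAB] Q by simp
  have cB': "(h has_integral IB) (cbox (0 - - b) (his - - b))"
  proof -
    have "((\<lambda>x. h (x + - b)) has_integral IB) (cbox (0 - - b) (his - - b))"
      using has_integral_translate_cbox[OF cB[unfolded B_def], of "- b"] .
    moreover have "h (x + - b) = h x" for x
      using per[of "x + - b"] by (simp add: b_def)
    ultimately show ?thesis by simp
  qed
  have sp2: "los$i \<le> 1" "1 \<le> (his - - b)$i" using s by (auto simp: b_def los_def his_def)
  have e1: "(1::real^'n) = (\<chi> j. if j = i then 1 else (his - - b)$j)"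
    by (simp add: vec_eq_iff b_def axis_def his_def)
  have e3: "0 - - b = (\<chi> j. if j = i then 1 else los$j)" by (simp add: vec_eq_iff b_def axis_def los_def)
  have e2: "s *\<^sub>R b = los" by (simp add: vec_eq_iff b_def axis_def los_def)
  have e4: "1 + s *\<^sub>R b = his - - b" by (simp add: vec_eq_iff b_def axis_def his_def)
  have Qs: "A \<union> cbox (0 - - b) (his - - b) = cbox los (his - - b)"
    unfolding A_def by (rule cbox_split_coord'(1)[OF sp2 e1 e3])
  have negAB': "negligible (A \<inter> cbox (0 - - b) (his - - b))"
    by (rule negligible_subset[OF negligible_coord_hyperplane[of i 1]])
       (unfold A_def, rule cbox_split_coord'(2)[OF sp2 e1 e3])
  have hQs: "(h has_integral (IA + IB)) (cbox los (his - - b))"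
    using has_integral_Un[OF cA cB' negAB'] Qs by simp
  have "((\<lambda>x. h (x + s *\<^sub>R b)) has_integral (IA + IB)) (cbox (los - s *\<^sub>R b) (his - - b - s *\<^sub>R b))"
    by (rule has_integral_translate_cbox[OF hQs])
  moreover have "los - s *\<^sub>R b = 0" "his - - b - s *\<^sub>R b = 1" using e2 e4 by (auto simp: algebra_simps)
  ultimately have "((\<lambda>x. h (x + s *\<^sub>R b)) has_integral (IA + IB)) (cbox 0 1)" by simp
  then show ?thesis using hQ by (simp add: integral_unique b_def add.commute)
qed



lemma integral_char:
  fixes k :: "real^'n"
  assumes kint: "\<And>j. k$j \<in> \<int>"
  shows "integral (cbox 0 1) (\<lambda>x. ee (k \<bullet> x)) = (if k = 0 then 1 else 0)"
proof (cases "k = 0")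
  case True
  have c1: "Henstock_Kurzweil_Integration.content (cbox (0::real^'n) 1) = 1" by (rule content_unit_cbox)
  show ?thesis using True by (simp add: ee_def c1)
next
  case False
  then obtain i where ki: "k$i \<noteq> 0" by (auto simp: vec_eq_iff)
  from kint[of i] obtain m :: int where m: "k$i = of_int m" by (auto elim: Ints_cases)
  have "m \<noteq> 0" using ki m by auto
  hence "(1::int) \<le> \<bar>m\<bar>" by arith
  hence "\<bar>k$i\<bar> \<ge> 1" unfolding m by (metis of_int_1_le_iff of_int_abs)
  define s where "s = 1 / (2 * \<bar>k$i\<bar>)"
  have s: "0 \<le> s" "s \<le> 1" using \<open>\<bar>k$i\<bar> \<ge> 1\<close> by (auto simp: s_def field_simps)
  define h where "h = (\<lambda>x::real^'n. ee (k \<bullet> x))"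
  have cont: "continuous_on UNIV h" unfolding h_def by (intro continuous_intros)
  have per: "h (x + axis i 1) = h x" for x
    unfolding h_def by (simp add: inner_add_right inner_axis ee_add ee_int kint)
  have ks: "k$i * s = 1/2 \<or> k$i * s = -1/2"
    using ki by (auto simp: s_def abs_if field_simps)
  have sh: "h (x + s *\<^sub>R axis i 1) = - h x" for x
  proof -
    have "h (x + s *\<^sub>R axis i 1) = ee (k \<bullet> x) * ee (k$i * s)"
      unfolding h_def by (simp add: inner_add_right inner_axis ee_add mult.commute)
    moreover have "ee (k$i * s) = -1" using ks ee_half ee_neg_half by metis
    ultimately show ?thesis by (simp add: h_def)
  qed
  have "integral (cbox 0 1) (\<lambda>x. h (x + s *\<^sub>R axis i 1)) = integral (cbox 0 1) h"
    by (rule shift_integral[OF cont per s])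
  then have "integral (cbox 0 1) (\<lambda>x. - h x) = integral (cbox 0 1) h" by (simp add: sh)
  then have "- integral (cbox 0 1) h = integral (cbox 0 1) h" by (simp add: integral_neg)
  then have "integral (cbox 0 1) h = 0" by simp
  then show ?thesis using False by (simp add: h_def)
qed



type_synonym 'n tm = "complex \<times> ('n \<Rightarrow> nat) \<times> ('n \<Rightarrow> nat)"

definition tmono :: "('n \<Rightarrow> nat) \<Rightarrow> ('n \<Rightarrow> nat) \<Rightarrow> complex^'n::finite \<Rightarrow> complex" where
  "tmono a b z = (\<Prod>j\<in>UNIV. (z$j) ^ a j * cnj (z$j) ^ b j)"

fun tpoly :: "'n tm list \<Rightarrow> complex^'n::finite \<Rightarrow> complex" where
  "tpoly [] z = 0"
| "tpoly ((c,a,b)#xs) z = c * tmono a b z + tpoly xs z"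

definition tmul :: "'n tm list \<Rightarrow> 'n tm list \<Rightarrow> 'n tm list" where
  "tmul xs ys = concat (map (\<lambda>(c,a,b). map (\<lambda>(d,a',b'). (c*d, \<lambda>j. a j + a' j, \<lambda>j. b j + b' j)) ys) xs)"

definition tcnj :: "'n tm list \<Rightarrow> 'n tm list" where
  "tcnj xs = map (\<lambda>(c,a,b). (cnj c, b, a)) xs"

definition tscale :: "complex \<Rightarrow> 'n tm list \<Rightarrow> 'n tm list" where
  "tscale r xs = map (\<lambda>(c,a,b). (r*c, a, b)) xs"

lemma mono_add: "tmono (\<lambda>j. a j + a' j) (\<lambda>j. b j + b' j) z = tmono a b z * tmono a' b' z"
  unfolding tmono_def by (simp add: power_add prod.distrib[symmetric] mult_ac)

lemma mono_cnj: "cnj (tmono a b z) = tmono b a z"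
  unfolding tmono_def by (simp add: mult.commute)

lemma mono_00: "tmono (\<lambda>_. 0) (\<lambda>_. 0) z = 1"
  unfolding tmono_def by simp

lemma tpoly_Cons: "tpoly (x#xs) z = (case x of (c,a,b) \<Rightarrow> c * tmono a b z) + tpoly xs z"
  by (cases x) auto

lemma tpoly_append: "tpoly (xs @ ys) z = tpoly xs z + tpoly ys z"
  by (induction xs) (auto simp: tpoly_Cons split: prod.splits)

lemma tpoly_map1: "tpoly (map (\<lambda>(d,a',b'). (c*d, \<lambda>j. a j + a' j, \<lambda>j. b j + b' j)) ys) z = c * tmono a b z * tpoly ys z"
proof (induction ys)
  case Nil then show ?case by simp
next
  case (Cons y ys)
  obtain d a' b' where y: "y = (d,a',b')" by (cases y) auto
  show ?case using Cons.IH by (simp add: y mono_add distrib_left mult_ac)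
qed

lemma tmul_Cons: "tmul ((c,a,b)#xs) ys = map (\<lambda>(d,a',b'). (c*d, \<lambda>j. a j + a' j, \<lambda>j. b j + b' j)) ys @ tmul xs ys"
  by (simp add: tmul_def)

lemma tpoly_mul: "tpoly (tmul xs ys) z = tpoly xs z * tpoly ys z"
proof (induction xs)
  case Nil then show ?case by (simp add: tmul_def)
next
  case (Cons x xs)
  obtain c a b where x: "x = (c,a,b)" by (cases x) auto
  show ?case using Cons.IH by (simp only: x tmul_Cons tpoly_append tpoly_map1 tpoly.simps distrib_right)
qed

lemma tpoly_cnj: "tpoly (tcnj xs) z = cnj (tpoly xs z)"
  unfolding tcnj_def by (induction xs) (auto simp: tpoly_Cons mono_cnj split: prod.splits)

lemma tpoly_scale: "tpoly (tscale r xs) z = r * tpoly xs z"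
  unfolding tscale_def by (induction xs) (auto simp: tpoly_Cons algebra_simps split: prod.splits)

lemma continuous_mono: "continuous_on A (tmono a b)"
  unfolding tmono_def by (intro continuous_intros)

lemma continuous_tpoly: "continuous_on A (tpoly xs)"
proof (induction xs)
  case Nil then show ?case by simp
next
  case (Cons x xs)
  obtain c a b where x: "x = (c,a,b)" by (cases x) auto
  have "continuous_on A (\<lambda>z. c * tmono a b z + tpoly xs z)"
    using Cons continuous_mono by (intro continuous_intros) auto
  then show ?case by (simp add: x)
qed

definition psi :: "real^'n::finite \<Rightarrow> complex^'n" where
  "psi x = (\<chi> j. ee (x$j))"

definition kv :: "('n \<Rightarrow> nat) \<Rightarrow> ('n \<Rightarrow> nat) \<Rightarrow> real^'n::finite" where
  "kv a b = (\<chi> j. real (a j) - real (b j))"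

lemma kv_int: "kv a b $ j \<in> \<int>"
  by (simp add: kv_def)

lemma kv_eq_0: "kv a b = 0 \<longleftrightarrow> a = b"
  by (auto simp: kv_def vec_eq_iff fun_eq_iff)

lemma mono_psi: "tmono a b (psi x) = ee (kv a b \<bullet> x)"
proof -
  have *: "(ee (x$j))^a j * cnj (ee (x$j))^b j = ee ((real (a j) - real (b j)) * x$j)" for j
  proof -
    have "(ee (x$j))^a j * cnj (ee (x$j))^b j = ee (real (a j) * x$j) * ee (real (b j) * - x$j)"
      by (simp only: ee_power cnj_ee)
    also have "\<dots> = ee (real (a j) * x$j + real (b j) * - x$j)" by (simp only: ee_add)
    also have "real (a j) * x$j + real (b j) * - x$j = (real (a j) - real (b j)) * x$j" by (simp add: algebra_simps)
    finally show ?thesis .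
  qed
  have "tmono a b (psi x) = (\<Prod>j\<in>UNIV. ee ((real (a j) - real (b j)) * x$j))"
    unfolding tmono_def psi_def vec_lambda_beta by (rule prod.cong[OF refl *])
  also have "\<dots> = ee (\<Sum>j\<in>UNIV. (real (a j) - real (b j)) * x$j)"
    by (rule ee_sum[symmetric]) simp
  also have "\<dots> = ee (kv a b \<bullet> x)"
    unfolding kv_def inner_vec_def by simp
  finally show ?thesis .
qed

lemma continuous_psi: "continuous_on A psi"
  unfolding psi_def by (intro continuous_intros)

lemma psi_eq_iff: "psi x = psi y \<longleftrightarrow> (\<forall>j. x$j - y$j \<in> \<int>)"
  by (simp add: psi_def vec_eq_iff ee_eq_iff)

lemma psi_proj: "psi (torus_proj x) = psi x"
  by (simp add: psi_def torus_proj_def vec_eq_iff ee_frac)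

lemma range_psi: "range psi = psi ` cbox 0 (1::real^'n::finite)"
proof
  show "range psi \<subseteq> psi ` cbox 0 (1::real^'n)"
  proof
    fix z assume "z \<in> range (psi :: real^'n \<Rightarrow> _)"
    then obtain x :: "real^'n" where "z = psi x" by auto
    moreover have "torus_proj x \<in> cbox 0 (1::real^'n)"
      using torus_proj_in_cube cube_sub_cbox by blast
    ultimately show "z \<in> psi ` cbox 0 (1::real^'n)" using psi_proj[of x] by (intro image_eqI[of _ _ "torus_proj x"]) auto
  qed
qed auto



lemma tmono_delta: "tmono (\<lambda>i. if i = j then 1 else 0) (\<lambda>_. 0) z = z$j"
  unfolding tmono_def by (subst prod.cong[OF refl, of _ _ "\<lambda>i. if i = j then z$i else 1"]) auto

lemma approx_trig:
  fixes f :: "real^'n \<Rightarrow> real"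
  assumes tc: "torus_continuous f" and e: "e > 0"
  shows "\<exists>xs. \<forall>x. \<bar>f x - Re (tpoly xs (psi x))\<bar> < e"
proof -
  define S where "S = range (psi :: real^'n \<Rightarrow> complex^'n)"
  define C where "C = cbox (0::real^'n) 1"
  have SC: "S = psi ` C" using range_psi by (simp add: S_def C_def)
  have cS: "compact S" unfolding SC C_def
    by (rule compact_continuous_image[OF continuous_psi compact_cbox])
  have fcont: "continuous_on UNIV f" and per: "\<And>x k. (\<forall>i. k$i \<in> \<int>) \<Longrightarrow> f (x + k) = f x"
    using tc by (auto simp: torus_continuous_def)
  define g where "g z = f (SOME x. psi x = z)" for z
  have gpsi: "g (psi x) = f x" for x
  proof -
    define y where "y = (SOME y. psi y = psi x)"
    have "psi y = psi x" unfolding y_def by (rule someI[of _ x]) simp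
    then have "\<forall>j. (y - x)$j \<in> \<int>" by (simp add: psi_eq_iff)
    then have "f (x + (y - x)) = f x" by (rule per)
    then show ?thesis by (simp add: g_def y_def)
  qed
  have gcont: "continuous_on S g"
    unfolding continuous_on_closed
  proof (intro allI impI)
    fix T assume "closedin (top_of_set (g ` S)) T"
    then obtain V where V: "closed V" "T = g ` S \<inter> V" by (auto simp: closedin_closed)
    have eq: "S \<inter> g -` T = psi ` (C \<inter> f -` V)"
      unfolding V SC using gpsi by auto
    have "closed (UNIV \<inter> f -` V)" by (rule continuous_closed_preimage[OF fcont closed_UNIV V(1)])
    then have "compact (C \<inter> f -` V)" unfolding C_def by (intro compact_Int_closed compact_cbox) auto
    then have "compact (psi ` (C \<inter> f -` V))" by (rule compact_continuous_image[OF continuous_psi])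
    then have "closed (psi ` (C \<inter> f -` V))" by (rule compact_imp_closed)
    moreover have "psi ` (C \<inter> f -` V) \<subseteq> S" unfolding SC by auto
    ultimately show "closedin (top_of_set S) (S \<inter> g -` T)" unfolding eq by (rule closed_subset[rotated])
  qed
  define R where "R = {h. \<exists>xs. h = (\<lambda>z::complex^'n. Re (tpoly xs z))}"
  have "function_ring_on R S"
  proof unfold_locales
    show "compact S" by (rule cS)
  next
    fix h assume "h \<in> R"
    then obtain xs where h: "h = (\<lambda>z. Re (tpoly xs z))" by (auto simp: R_def)
    show "continuous_on S h" unfolding h by (rule continuous_on_Re[OF continuous_tpoly])
  next
    fix h1 h2 assume "h1 \<in> R" "h2 \<in> R"
    then obtain xs ys where h: "h1 = (\<lambda>z. Re (tpoly xs z))" "h2 = (\<lambda>z. Re (tpoly ys z))" by (auto simp: R_def)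
    have "(\<lambda>x. h1 x + h2 x) = (\<lambda>z. Re (tpoly (xs @ ys) z))" by (simp add: h tpoly_append)
    then show "(\<lambda>x. h1 x + h2 x) \<in> R" unfolding R_def by blast
  next
    fix h1 h2 assume "h1 \<in> R" "h2 \<in> R"
    then obtain xs ys where h: "h1 = (\<lambda>z. Re (tpoly xs z))" "h2 = (\<lambda>z. Re (tpoly ys z))" by (auto simp: R_def)
    have "tpoly (tscale (1/2) (tmul xs ys @ tmul xs (tcnj ys))) z = tpoly xs z * of_real (Re (tpoly ys z))" for z
    proof -
      have "tpoly (tscale (1/2) (tmul xs ys @ tmul xs (tcnj ys))) z
            = (1/2) * (tpoly xs z * (tpoly ys z + cnj (tpoly ys z)))"
        by (simp add: tpoly_scale tpoly_append tpoly_mul tpoly_cnj distrib_left)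
      also have "\<dots> = tpoly xs z * of_real (Re (tpoly ys z))"
        by (simp add: complex_add_cnj)
      finally show ?thesis .
    qed
    then have "(\<lambda>x. h1 x * h2 x) = (\<lambda>z. Re (tpoly (tscale (1/2) (tmul xs ys @ tmul xs (tcnj ys))) z))"
      by (simp add: h fun_eq_iff)
    then show "(\<lambda>x. h1 x * h2 x) \<in> R" unfolding R_def by blast
  next
    fix c :: real
    have "(\<lambda>_. c) = (\<lambda>z::complex^'n. Re (tpoly [(of_real c, \<lambda>_. 0, \<lambda>_. 0)] z))"
      by (simp add: fun_eq_iff mono_00)
    then show "(\<lambda>_. c) \<in> R" unfolding R_def by blast
  next
    fix z w assume "z \<in> S" "w \<in> S" "z \<noteq> w"
    then obtain j where j: "z$j \<noteq> w$j" by (auto simp: vec_eq_iff)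
    define dj where "dj = (\<lambda>i. if i = j then 1 else 0::nat)"
    have t1: "tpoly [(c, dj, \<lambda>_. 0)] u = c * u$j" for c u by (simp add: dj_def tmono_delta)
    show "\<exists>h\<in>R. h z \<noteq> h w"
    proof (cases "Re (z$j) = Re (w$j)")
      case False
      define h where "h = (\<lambda>u. Re (tpoly [(1, dj, \<lambda>_. 0)] u))"
      have "h \<in> R" unfolding R_def h_def by blast
      moreover have "h z \<noteq> h w"
        using False unfolding h_def by (simp only: t1) simp
      ultimately show ?thesis by blast
    next
      case True
      then have "Im (z$j) \<noteq> Im (w$j)" using j by (auto simp: complex_eq_iff)
      define h where "h = (\<lambda>u. Re (tpoly [(- \<i>, dj, \<lambda>_. 0)] u))"
      have "h \<in> R" unfolding R_def h_def by blast
      moreover have "h z \<noteq> h w"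
        using \<open>Im (z$j) \<noteq> Im (w$j)\<close> unfolding h_def by (simp only: t1) simp
      ultimately show ?thesis by blast
    qed
  qed
  from function_ring_on.Stone_Weierstrass_basic[OF this gcont e]
  obtain h where "h \<in> R" and h: "\<forall>z\<in>S. \<bar>g z - h z\<bar> < e" by blast
  then obtain xs where hx: "h = (\<lambda>z. Re (tpoly xs z))" by (auto simp: R_def)
  have "\<bar>f x - Re (tpoly xs (psi x))\<bar> < e" for x
    using h[rule_format, of "psi x"] by (simp add: S_def gpsi hx)
  then show ?thesis by blast
qed



definition avg :: "nat \<Rightarrow> (real^'n::finite \<Rightarrow> complex) \<Rightarrow> real^'n \<Rightarrow> complex" where
  "avg M h v = (\<Sum>m<M. h (real m *\<^sub>R v)) / of_nat M"

definition trig :: "'n tm list \<Rightarrow> real^'n::finite \<Rightarrow> complex" where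
  "trig xs x = tpoly xs (psi x)"

fun tmean :: "'n tm list \<Rightarrow> complex" where
  "tmean [] = 0"
| "tmean ((c,a,b)#xs) = (if a = b then c else 0) + tmean xs"

definition Kset :: "'n tm list \<Rightarrow> (real^'n::finite) set" where
  "Kset xs = (\<lambda>(c,a,b). kv a b) ` {(c,a,b). (c,a,b) \<in> set xs \<and> a \<noteq> b}"

definition Good :: "(real^'n::finite) set \<Rightarrow> real \<Rightarrow> real^'n \<Rightarrow> bool" where
  "Good K \<eta> v \<longleftrightarrow> (\<forall>k\<in>K. \<forall>j::int. infdist v {x. k \<bullet> x = of_int j} > \<eta>)"

lemma Kset_finite: "finite (Kset xs)"
proof -
  have "{(c,a,b). (c,a,b) \<in> set xs \<and> a \<noteq> b} \<subseteq> set xs" by auto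
  then show ?thesis unfolding Kset_def by (meson finite_imageI finite_set finite_subset)
qed

lemma Kset_props: "k \<in> Kset xs \<Longrightarrow> k \<noteq> 0 \<and> (\<forall>j. k$j \<in> \<int>)"
  by (auto simp: Kset_def kv_eq_0 kv_int)

lemma Kset_Cons: "Kset xs \<subseteq> Kset (x#xs)"
  unfolding Kset_def by (rule image_mono) auto

lemma Kset_Cons_mem: "a \<noteq> b \<Longrightarrow> kv a b \<in> Kset ((c,a,b)#xs)"
  unfolding Kset_def by force

lemma Good_mono: "Good K \<eta> v \<Longrightarrow> K' \<subseteq> K \<Longrightarrow> Good K' \<eta> v"
  unfolding Good_def by auto

lemma gap:
  assumes "\<delta> > 0"
  shows "\<exists>c>0. \<forall>t. (\<forall>j::int. \<bar>t - of_int j\<bar> \<ge> \<delta>) \<longrightarrow> c \<le> norm (1 - ee t)"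
proof -
  define d where "d = min \<delta> (1/2)"
  have d: "0 < d" "d \<le> 1/2" "d \<le> \<delta>" using assms by (auto simp: d_def)
  have "compact {d..1-d}" by simp
  moreover have "{d..1-d} \<noteq> {}" using d by auto
  moreover have "continuous_on {d..1-d} (\<lambda>s. norm (1 - ee s))" by (intro continuous_intros)
  ultimately obtain s0 where s0: "s0 \<in> {d..1-d}" and min: "\<And>s. s \<in> {d..1-d} \<Longrightarrow> norm (1 - ee s0) \<le> norm (1 - ee s)"
    using continuous_attains_inf[of "{d..1-d}" "\<lambda>s. norm (1 - ee s)"] by blast
  have "s0 \<notin> \<int>"
  proof
    assume "s0 \<in> \<int>"
    then obtain n :: int where "s0 = of_int n" by (auto elim: Ints_cases)
    with s0 d have "0 < real_of_int n" "real_of_int n < 1" by auto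
    then have "0 < n" "n < 1" by simp_all
    then show False by linarith
  qed
  then have "ee s0 \<noteq> 1" using ee_eq_1 by blast
  then have pos: "norm (1 - ee s0) > 0" by simp
  show ?thesis
  proof (intro exI[of _ "norm (1 - ee s0)"] conjI allI impI pos)
    fix t assume H: "\<forall>j::int. \<delta> \<le> \<bar>t - of_int j\<bar>"
    have "\<delta> \<le> \<bar>t - of_int \<lfloor>t\<rfloor>\<bar>" "\<delta> \<le> \<bar>t - of_int (\<lfloor>t\<rfloor> + 1)\<bar>" using H by blast+
    then have "frac t \<in> {d..1-d}" using d by (auto simp: frac_def)
    then have "norm (1 - ee s0) \<le> norm (1 - ee (frac t))" by (rule min)
    then show "norm (1 - ee s0) \<le> norm (1 - ee t)" by (simp add: ee_frac)
  qed
qed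

lemma infdist_hyperplane:
  fixes k v :: "real^'n::finite"
  assumes "k \<noteq> 0"
  shows "infdist v {x. k \<bullet> x = r} * norm k \<le> \<bar>k \<bullet> v - r\<bar>"
proof -
  define y where "y = v - ((k \<bullet> v - r) / (k \<bullet> k)) *\<^sub>R k"
  have kk: "k \<bullet> k \<noteq> 0" using assms by simp
  have "k \<bullet> y = r" unfolding y_def using kk by (simp add: inner_diff_right field_simps)
  then have "infdist v {x. k \<bullet> x = r} \<le> dist v y" by (intro infdist_le) simp
  also have "dist v y = \<bar>k \<bullet> v - r\<bar> / \<bar>k \<bullet> k\<bar> * norm k"
    unfolding y_def dist_norm by (simp add: abs_divide)
  also have "\<bar>k \<bullet> k\<bar> = norm k * norm k" by (simp add: power2_norm_eq_inner[symmetric] power2_eq_square)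
  finally have "infdist v {x. k \<bullet> x = r} \<le> \<bar>k \<bullet> v - r\<bar> / norm k" using assms by simp
  then show ?thesis using assms by (simp add: field_simps)
qed

lemma geom_bound:
  fixes w :: complex
  assumes "norm w = 1" "w \<noteq> 1"
  shows "norm (\<Sum>m<M. w ^ m) \<le> 2 / norm (1 - w)"
proof -
  have "(\<Sum>m<M. w ^ m) = (1 - w ^ M) / (1 - w)" using assms(2) by (simp add: sum_gp_strict)
  moreover have "norm (1 - w ^ M) \<le> 2"
    using norm_triangle_ineq4[of 1 "w^M"] assms(1) by (simp add: norm_power)
  ultimately show ?thesis using assms(2) by (simp add: norm_divide divide_right_mono)
qed

lemma avg_char: "avg M (\<lambda>x. ee (k \<bullet> x)) v = (\<Sum>m<M. ee (k \<bullet> v) ^ m) / of_nat M"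
  unfolding avg_def by (simp add: ee_power mult_ac)

lemma trig_Cons: "trig ((c,a,b)#xs) x = c * ee (kv a b \<bullet> x) + trig xs x"
  by (simp add: trig_def mono_psi)

lemma avg_add: "avg M (\<lambda>x. f x + g x) v = avg M f v + avg M g v"
  unfolding avg_def by (simp add: sum.distrib add_divide_distrib)

lemma avg_cmult: "avg M (\<lambda>x. c * f x) v = c * avg M f v"
  unfolding avg_def by (simp add: sum_distrib_left)

lemma avg_const: "M > 0 \<Longrightarrow> avg M (\<lambda>x. c) v = c"
  unfolding avg_def by simp

lemma weyl:
  assumes "\<eta> > 0"
  shows "\<forall>\<epsilon>>0. eventually (\<lambda>M. \<forall>v. Good (Kset xs) \<eta> v \<and> M > 0 \<longrightarrow> norm (avg M (trig xs) v - tmean xs) < \<epsilon>) sequentially"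
proof (induction xs)
  case Nil
  then show ?case by (simp add: trig_def avg_def)
next
  case (Cons x xs)
  obtain c a b where x: "x = (c,a,b)" by (cases x) auto
  show ?case
  proof (intro allI impI)
    fix \<epsilon> :: real assume e: "\<epsilon> > 0"
    have tr: "trig (x#xs) = (\<lambda>y. c * ee (kv a b \<bullet> y) + trig xs y)" by (simp add: x trig_Cons fun_eq_iff)
    show "eventually (\<lambda>M. \<forall>v. Good (Kset (x#xs)) \<eta> v \<and> M > 0 \<longrightarrow> norm (avg M (trig (x#xs)) v - tmean (x#xs)) < \<epsilon>) sequentially"
    proof (cases "a = b")
      case True
      from Cons[rule_format, OF e]
      show ?thesis
      proof (rule eventually_mono)
        fix M assume H: "\<forall>v. Good (Kset xs) \<eta> v \<and> M > 0 \<longrightarrow> norm (avg M (trig xs) v - tmean xs) < \<epsilon>"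
        show "\<forall>v. Good (Kset (x#xs)) \<eta> v \<and> M > 0 \<longrightarrow> norm (avg M (trig (x#xs)) v - tmean (x#xs)) < \<epsilon>"
        proof (intro allI impI)
          fix v assume G: "Good (Kset (x#xs)) \<eta> v \<and> M > 0"
          then have G': "Good (Kset xs) \<eta> v" using Good_mono Kset_Cons by blast
          have k0: "kv a b = 0" using True by (simp add: kv_eq_0)
          have "avg M (trig (x#xs)) v = c + avg M (trig xs) v"
            unfolding tr avg_add avg_cmult k0 using G by (simp add: avg_const ee_def)
          then show "norm (avg M (trig (x#xs)) v - tmean (x#xs)) < \<epsilon>"
            using H G G' True by (simp add: x)
        qed
      qed
    next
      case False
      define k where "k = kv a b"
      have k0: "k \<noteq> 0" and kK: "k \<in> Kset (x#xs)" using False by (auto simp: k_def kv_eq_0 x Kset_Cons_mem)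
      have "\<eta> * norm k > 0" using assms k0 by simp
      from gap[OF this] obtain c0 where c0: "c0 > 0"
        and c0b: "\<And>t. (\<forall>j::int. \<bar>t - of_int j\<bar> \<ge> \<eta> * norm k) \<Longrightarrow> c0 \<le> norm (1 - ee t)" by blast
      define N where "N = nat \<lceil>4 * (norm c + 1) / (c0 * \<epsilon>)\<rceil> + 1"
      have ev1: "eventually (\<lambda>M. M \<ge> N) sequentially" by (rule eventually_ge_at_top)
      from Cons[rule_format, of "\<epsilon>/2"] e have ev2:
        "eventually (\<lambda>M. \<forall>v. Good (Kset xs) \<eta> v \<and> M > 0 \<longrightarrow> norm (avg M (trig xs) v - tmean xs) < \<epsilon>/2) sequentially"
        by simp
      show ?thesis
      proof (rule eventually_mono[OF eventually_conj[OF ev1 ev2]])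
        fix M assume H: "N \<le> M \<and> (\<forall>v. Good (Kset xs) \<eta> v \<and> M > 0 \<longrightarrow> norm (avg M (trig xs) v - tmean xs) < \<epsilon>/2)"
        show "\<forall>v. Good (Kset (x#xs)) \<eta> v \<and> M > 0 \<longrightarrow> norm (avg M (trig (x#xs)) v - tmean (x#xs)) < \<epsilon>"
        proof (intro allI impI)
          fix v assume G: "Good (Kset (x#xs)) \<eta> v \<and> M > 0"
          then have G': "Good (Kset xs) \<eta> v" using Good_mono Kset_Cons by blast
          have dist: "\<bar>k \<bullet> v - of_int j\<bar> \<ge> \<eta> * norm k" for j :: int
          proof -
            have "\<eta> < infdist v {y. k \<bullet> y = of_int j}" using G kK unfolding Good_def by blast
            then have "\<eta> * norm k \<le> infdist v {y. k \<bullet> y = of_int j} * norm k"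
              by (intro mult_right_mono) auto
            also have "\<dots> \<le> \<bar>k \<bullet> v - of_int j\<bar>" by (rule infdist_hyperplane[OF k0])
            finally show ?thesis .
          qed
          have cw: "c0 \<le> norm (1 - ee (k \<bullet> v))" using dist by (intro c0b) blast
          then have w1: "ee (k \<bullet> v) \<noteq> 1" using c0 by auto
          have Mpos: "real M > 0" using G by simp
          have "norm (avg M (\<lambda>y. ee (k \<bullet> y)) v) = norm (\<Sum>m<M. ee (k \<bullet> v) ^ m) / real M"
            by (simp add: avg_char norm_divide)
          also have "\<dots> \<le> (2 / norm (1 - ee (k \<bullet> v))) / real M"
            by (rule divide_right_mono[OF geom_bound[OF norm_ee w1]]) simp
          also have "\<dots> \<le> (2 / c0) / real M" using cw c0 Mpos
            by (intro divide_right_mono frac_le) auto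
          finally have A: "norm (avg M (\<lambda>y. ee (k \<bullet> y)) v) \<le> 2 / (c0 * real M)" by simp
          have "real N > 4 * (norm c + 1) / (c0 * \<epsilon>)" unfolding N_def by linarith
          then have MN: "real M > 4 * (norm c + 1) / (c0 * \<epsilon>)" using H by linarith
          then have "real M * (c0 * \<epsilon>) > 4 * (norm c + 1)" using c0 e by (simp add: field_simps)
          then have B: "norm c * (2 / (c0 * real M)) < \<epsilon> / 2" using c0 e Mpos
            by (simp add: field_simps)
          have "norm (c * avg M (\<lambda>y. ee (k \<bullet> y)) v) \<le> norm c * (2 / (c0 * real M))"
            unfolding norm_mult by (rule mult_left_mono[OF A norm_ge_zero])
          with B have C: "norm (c * avg M (\<lambda>y. ee (k \<bullet> y)) v) < \<epsilon>/2" by linarith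
          have D: "norm (avg M (trig xs) v - tmean xs) < \<epsilon>/2" using H G G' by blast
          have eq: "avg M (trig (x#xs)) v - tmean (x#xs) = c * avg M (\<lambda>y. ee (k \<bullet> y)) v + (avg M (trig xs) v - tmean xs)"
            unfolding tr avg_add avg_cmult using False by (simp add: x k_def)
          show "norm (avg M (trig (x#xs)) v - tmean (x#xs)) < \<epsilon>"
            unfolding eq using norm_triangle_ineq[of "c * avg M (\<lambda>y. ee (k \<bullet> y)) v" "avg M (trig xs) v - tmean xs"] C D
            by linarith
        qed
      qed
    qed
  qed
qed



lemma continuous_trig: "continuous_on A (trig xs)"
  unfolding trig_def by (intro continuous_on_compose2[OF continuous_tpoly continuous_psi]) auto

lemma has_integral_trig: "(trig xs has_integral tmean xs) (cbox 0 (1::real^'n::finite))"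
proof (induction xs)
  case Nil
  then show ?case by (simp add: trig_def)
next
  case (Cons x xs)
  obtain c a b where x: "x = (c,a,b)" by (cases x) auto
  have int: "((\<lambda>y::real^'n. ee (kv a b \<bullet> y)) has_integral (if a = b then 1 else 0)) (cbox 0 1)"
  proof -
    have "(\<lambda>y::real^'n. ee (kv a b \<bullet> y)) integrable_on cbox 0 1"
      by (intro integrable_continuous continuous_intros)
    then show ?thesis using integral_char[of "kv a b", OF kv_int] by (simp add: kv_eq_0 has_integral_integral)
  qed
  have "((\<lambda>y. c * ee (kv a b \<bullet> y) + trig xs y) has_integral (c * (if a = b then 1 else 0) + tmean xs)) (cbox 0 1)"
    by (intro has_integral_add has_integral_mult_right int Cons)
  moreover have "trig (x#xs) = (\<lambda>y. c * ee (kv a b \<bullet> y) + trig xs y)" by (simp add: x trig_Cons fun_eq_iff)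
  moreover have "tmean (x#xs) = c * (if a = b then 1 else 0) + tmean xs" by (simp add: x)
  ultimately show ?case by (simp only:)
qed

lemma single_f:
  fixes f :: "real^'n::finite \<Rightarrow> real"
  assumes tc: "torus_continuous f" and e: "e > 0"
  shows "\<exists>K. finite K \<and> (\<forall>k\<in>K. k \<noteq> 0 \<and> (\<forall>j. k$j \<in> \<int>)) \<and>
    (\<forall>\<eta>>0. eventually (\<lambda>M. \<forall>v. Good K \<eta> v \<and> M > 0 \<longrightarrow>
        \<bar>integral\<^sup>L (orbit_average M v) f - integral\<^sup>L torus_leb f\<bar> < e) sequentially)"
proof -
  have e3: "e/3 > 0" using e by simp
  obtain xs where xs: "\<And>x. \<bar>f x - Re (trig xs x)\<bar> < e/3"
    using approx_trig[OF tc e3] unfolding trig_def by blast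
  have fcont: "continuous_on UNIV f" using tc by (simp add: torus_continuous_def)
  have leb: "\<bar>integral\<^sup>L torus_leb f - Re (tmean xs)\<bar> \<le> e/3"
  proof -
    have hf: "(f has_integral integral (cbox 0 1) f) (cbox (0::real^'n) 1)"
      using fcont by (intro integrable_integral integrable_continuous) (auto intro: continuous_on_subset)
    have hr: "((\<lambda>x. Re (trig xs x)) has_integral Re (tmean xs)) (cbox (0::real^'n) 1)"
      by (rule has_integral_Re[OF has_integral_trig])
    have "norm (integral (cbox 0 1) f - Re (tmean xs)) \<le> e/3 * Henstock_Kurzweil_Integration.content (cbox (0::real^'n) 1)"
      by (rule has_integral_bound[OF _ has_integral_diff[OF hf hr]]) (use e3 xs in \<open>auto intro: less_imp_le\<close>)
    then show ?thesis using torus_leb_integral[OF fcont] content_unit_cbox[where 'n='n] by simp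
  qed
  show ?thesis
  proof (intro exI[of _ "Kset xs"] conjI)
    show "finite (Kset xs)" by (rule Kset_finite)
  next
    show "\<forall>k\<in>Kset xs. k \<noteq> 0 \<and> (\<forall>j. k$j \<in> \<int>)" using Kset_props by blast
  next
    show "\<forall>\<eta>>0. eventually (\<lambda>M. \<forall>v. Good (Kset xs) \<eta> v \<and> M > 0 \<longrightarrow>
        \<bar>integral\<^sup>L (orbit_average M v) f - integral\<^sup>L torus_leb f\<bar> < e) sequentially"
    proof (intro allI impI)
    fix \<eta> :: real assume eta: "\<eta> > 0"
    from weyl[OF eta, rule_format, OF e3]
    show "eventually (\<lambda>M. \<forall>v. Good (Kset xs) \<eta> v \<and> M > 0 \<longrightarrow>
        \<bar>integral\<^sup>L (orbit_average M v) f - integral\<^sup>L torus_leb f\<bar> < e) sequentially"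
    proof (rule eventually_mono)
      fix M assume H: "\<forall>v. Good (Kset xs) \<eta> v \<and> M > 0 \<longrightarrow> norm (avg M (trig xs) v - tmean xs) < e/3"
      show "\<forall>v. Good (Kset xs) \<eta> v \<and> M > 0 \<longrightarrow>
        \<bar>integral\<^sup>L (orbit_average M v) f - integral\<^sup>L torus_leb f\<bar> < e"
      proof (intro allI impI)
        fix v assume G: "Good (Kset xs) \<eta> v \<and> M > 0"
        then have M0: "M > 0" by simp
        have w: "norm (avg M (trig xs) v - tmean xs) < e/3" using H G by blast
        have "\<bar>Re (avg M (trig xs) v) - Re (tmean xs)\<bar> \<le> norm (avg M (trig xs) v - tmean xs)"
          using abs_Re_le_cmod[of "avg M (trig xs) v - tmean xs"] by simp
        with w have A: "\<bar>Re (avg M (trig xs) v) - Re (tmean xs)\<bar> < e/3" by linarith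
        have I1: "integral\<^sup>L (orbit_average M v) f = (\<Sum>m<M. f (real m *\<^sub>R v)) / real M"
          by (rule orbit_average_integral[OF M0 tc])
        have R: "Re (avg M (trig xs) v) = (\<Sum>m<M. Re (trig xs (real m *\<^sub>R v))) / real M"
          by (simp add: avg_def)
        have "\<bar>\<Sum>m<M. f (real m *\<^sub>R v) - Re (trig xs (real m *\<^sub>R v))\<bar>
              \<le> (\<Sum>m<M. \<bar>f (real m *\<^sub>R v) - Re (trig xs (real m *\<^sub>R v))\<bar>)" by (rule sum_abs)
        also have "\<dots> < (\<Sum>m<M. e/3)" using M0 xs by (intro sum_strict_mono) auto
        also have "\<dots> = real M * (e/3)" by simp
        finally have "\<bar>(\<Sum>m<M. f (real m *\<^sub>R v)) - (\<Sum>m<M. Re (trig xs (real m *\<^sub>R v)))\<bar> < real M * (e/3)"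
          by (simp add: sum_subtractf)
        then have B: "\<bar>integral\<^sup>L (orbit_average M v) f - Re (avg M (trig xs) v)\<bar> < e/3"
          unfolding I1 R using M0 by (simp add: diff_divide_distrib[symmetric] abs_divide field_simps)
        show "\<bar>integral\<^sup>L (orbit_average M v) f - integral\<^sup>L torus_leb f\<bar> < e"
          using A B leb by linarith
      qed
    qed
    qed
  qed
qed



lemma finite_int_near: "finite {j::int. \<bar>of_int j - c\<bar> < (R::real)}"
proof (rule finite_subset[of _ "{\<lceil>c - R\<rceil>..\<lfloor>c + R\<rfloor>}"])
  show "{j::int. \<bar>of_int j - c\<bar> < R} \<subseteq> {\<lceil>c - R\<rceil>..\<lfloor>c + R\<rfloor>}"
    by (auto simp: ceiling_le_iff le_floor_iff abs_less_iff)
qed simp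

lemma locfin:
  fixes K :: "(real^'n::finite) set"
  assumes K: "finite K" "\<And>k. k \<in> K \<Longrightarrow> k \<noteq> 0"
  shows "locally_finite_family {{x. k \<bullet> x = of_int j} | k j. k \<in> K}"
  unfolding locally_finite_family_def
proof
  fix x :: "real^'n"
  define J where "J = (\<Union>k\<in>K. {j::int. \<bar>of_int j - k \<bullet> x\<bar> < norm k})"
  have fJ: "finite J" unfolding J_def using K(1) finite_int_near by blast
  have "{h \<in> {{x. k \<bullet> x = of_int j} | k j. k \<in> K}. h \<inter> ball x 1 \<noteq> {}}
        \<subseteq> (\<lambda>(k,j). {y. k \<bullet> y = of_int j}) ` (K \<times> J)"
  proof
    fix h assume "h \<in> {h \<in> {{x. k \<bullet> x = of_int j} | k j. k \<in> K}. h \<inter> ball x 1 \<noteq> {}}"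
    then obtain k j where kK: "k \<in> K" and h: "h = {x. k \<bullet> x = of_int j}" and ne: "h \<inter> ball x 1 \<noteq> {}"
      by blast
    then obtain y where "y \<in> h" "y \<in> ball x 1" by blast
    then have y: "k \<bullet> y = of_int j" "dist x y < 1" using h by auto
    have "\<bar>of_int j - k \<bullet> x\<bar> = \<bar>k \<bullet> (y - x)\<bar>" using y by (simp add: inner_diff_right)
    also have "\<dots> \<le> norm k * norm (y - x)" by (rule Cauchy_Schwarz_ineq2)
    also have "\<dots> < norm k * 1"
      using y K(2)[OF kK] by (intro mult_strict_left_mono) (auto simp: dist_norm norm_minus_commute)
    finally have "j \<in> J" unfolding J_def using kK by auto
    then show "h \<in> (\<lambda>(k,j). {y. k \<bullet> y = of_int j}) ` (K \<times> J)" using kK h by auto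
  qed
  moreover have "finite ((\<lambda>(k,j). {y. k \<bullet> y = of_int j}) ` (K \<times> J))" using K(1) fJ by simp
  ultimately show "\<exists>r>0. finite {h \<in> {{x. k \<bullet> x = of_int j} | k j. k \<in> K}. h \<inter> ball x r \<noteq> {}}"
    by (intro exI[of _ 1]) (auto intro: finite_subset)
qed

theorem lemma3p8:
  fixes D :: "(real^'n) measure \<Rightarrow> (real^'n) measure \<Rightarrow> real"
  assumes metric: "Metric_space torus_prob_measures D"
    and generates: "\<And>U. openin (Metric_space.mtopology torus_prob_measures D) U
                          \<longleftrightarrow> weak_star_open U"
    and eps: "\<epsilon> > 0"
  shows "\<exists>Hs. (\<forall>h\<in>Hs. affine_hyperplane h) \<and> locally_finite_family Hs \<and>
           (\<forall>\<eta>>0. \<exists>M0::nat. \<forall>v::real^'n. \<forall>M::nat.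
              (\<forall>h\<in>Hs. infdist v h > \<eta>) \<and> M \<ge> M0 \<and> M > 0 \<longrightarrow>
              D (orbit_average M v) torus_leb < \<epsilon>)"
proof -
  interpret Metric_space torus_prob_measures D by (rule metric)
  have "weak_star_open (mball torus_leb \<epsilon>)" using generates openin_mball by blast
  moreover have "torus_leb \<in> mball torus_leb \<epsilon>" using torus_leb_prob eps centre_in_mball_iff by blast
  ultimately obtain F e where F: "finite F" "\<forall>f\<in>F. torus_continuous f" "e > 0"
    and sub: "{\<nu>\<in>torus_prob_measures. \<forall>f\<in>F. \<bar>integral\<^sup>L \<nu> f - integral\<^sup>L torus_leb f\<bar> < e} \<subseteq> mball torus_leb \<epsilon>"
    unfolding weak_star_open_def by blast
  have "\<forall>f\<in>F. \<exists>K. finite K \<and> (\<forall>k\<in>K. k \<noteq> 0 \<and> (\<forall>j. k$j \<in> \<int>)) \<and>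
    (\<forall>\<eta>>0. eventually (\<lambda>M. \<forall>v. Good K \<eta> v \<and> M > 0 \<longrightarrow>
        \<bar>integral\<^sup>L (orbit_average M v) f - integral\<^sup>L torus_leb f\<bar> < e) sequentially)"
    using single_f F(2,3) by blast
  from bchoice[OF this] obtain Kf where Kf0: "\<forall>f\<in>F. finite (Kf f) \<and> (\<forall>k\<in>Kf f. k \<noteq> 0 \<and> (\<forall>j. k$j \<in> \<int>)) \<and>
    (\<forall>\<eta>>0. eventually (\<lambda>M. \<forall>v. Good (Kf f) \<eta> v \<and> M > 0 \<longrightarrow>
        \<bar>integral\<^sup>L (orbit_average M v) f - integral\<^sup>L torus_leb f\<bar> < e) sequentially)"
    by (elim exE) (rule that)
  have Kf: "\<And>f. f \<in> F \<Longrightarrow> finite (Kf f) \<and> (\<forall>k\<in>Kf f. k \<noteq> 0 \<and> (\<forall>j. k$j \<in> \<int>)) \<and>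
    (\<forall>\<eta>>0. eventually (\<lambda>M. \<forall>v. Good (Kf f) \<eta> v \<and> M > 0 \<longrightarrow>
        \<bar>integral\<^sup>L (orbit_average M v) f - integral\<^sup>L torus_leb f\<bar> < e) sequentially)"
    using Kf0 by (rule bspec)
  define K where "K = (\<Union>f\<in>F. Kf f)"
  have Kfin: "finite K" unfolding K_def using F(1) Kf by blast
  have K0: "\<And>k. k \<in> K \<Longrightarrow> k \<noteq> 0" unfolding K_def using Kf by blast
  define Hs where "Hs = {{x::real^'n. k \<bullet> x = of_int j} | k j. k \<in> K}"
  show ?thesis
  proof (intro exI[of _ Hs] conjI allI impI ballI)
    fix h assume "h \<in> Hs"
    then show "affine_hyperplane h" unfolding Hs_def affine_hyperplane_def using K0 by blast
  next
    show "locally_finite_family Hs" unfolding Hs_def by (rule locfin[OF Kfin K0])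
  next
    fix \<eta> :: real assume eta: "\<eta> > 0"
    have "eventually (\<lambda>M. \<forall>f\<in>F. \<forall>v. Good (Kf f) \<eta> v \<and> M > 0 \<longrightarrow>
        \<bar>integral\<^sup>L (orbit_average M v) f - integral\<^sup>L torus_leb f\<bar> < e) sequentially"
      using Kf eta F(1) by (intro eventually_ball_finite) auto
    then obtain M0 where M0: "\<And>M. M \<ge> M0 \<Longrightarrow> \<forall>f\<in>F. \<forall>v. Good (Kf f) \<eta> v \<and> M > 0 \<longrightarrow>
        \<bar>integral\<^sup>L (orbit_average M v) f - integral\<^sup>L torus_leb f\<bar> < e"
      unfolding eventually_sequentially by blast
    show "\<exists>M0::nat. \<forall>v::real^'n. \<forall>M::nat. (\<forall>h\<in>Hs. infdist v h > \<eta>) \<and> M \<ge> M0 \<and> M > 0 \<longrightarrow>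
              D (orbit_average M v) torus_leb < \<epsilon>"
    proof (intro exI[of _ M0] allI impI)
      fix v :: "real^'n" and M :: nat
      assume H: "(\<forall>h\<in>Hs. infdist v h > \<eta>) \<and> M \<ge> M0 \<and> M > 0"
      have "Good K \<eta> v" unfolding Good_def
      proof (intro ballI allI)
        fix k and j :: int assume "k \<in> K"
        then have "{x. k \<bullet> x = of_int j} \<in> Hs" unfolding Hs_def by blast
        then show "\<eta> < infdist v {x. k \<bullet> x = of_int j}" using H by blast
      qed
      then have G: "\<And>f. f \<in> F \<Longrightarrow> Good (Kf f) \<eta> v" using Good_mono unfolding K_def by blast
      have "orbit_average M v \<in> {\<nu>\<in>torus_prob_measures. \<forall>f\<in>F. \<bar>integral\<^sup>L \<nu> f - integral\<^sup>L torus_leb f\<bar> < e}"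
      proof -
        have om: "orbit_average M v \<in> torus_prob_measures" using orbit_average_prob H by blast
        have "\<forall>f\<in>F. \<bar>integral\<^sup>L (orbit_average M v) f - integral\<^sup>L torus_leb f\<bar> < e"
        proof
          fix f assume f: "f \<in> F"
          have "M0 \<le> M" "0 < M" using H by auto
          from M0[OF this(1)] f have "Good (Kf f) \<eta> v \<and> M > 0 \<longrightarrow>
               \<bar>integral\<^sup>L (orbit_average M v) f - integral\<^sup>L torus_leb f\<bar> < e" by blast
          then show "\<bar>integral\<^sup>L (orbit_average M v) f - integral\<^sup>L torus_leb f\<bar> < e"
            using G[OF f] \<open>0 < M\<close> by blast
        qed
        then show ?thesis using om by blast
      qed
      then have "orbit_average M v \<in> mball torus_leb \<epsilon>" using sub by blast
      then have "D torus_leb (orbit_average M v) < \<epsilon>" by simp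
      then show "D (orbit_average M v) torus_leb < \<epsilon>" by (simp add: commute)
    qed
  qed
qed

end
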